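(* Let $0<q<1$, let $r\ge1$, $s\ge1$ be integers with $r-1\le s$, and $\alpha\in\mathbb{R}\setminus\mathbb{Z}_-$. Let $a_j>0$ real and $b_j\in\mathbb{C}$ ($j=1,\dots,r-1$), and $c_\ell>0$ real and $d_\ell\in\mathbb{C}$ ($\ell=1,\dots,s-1$), with $a_jn+\mathrm{Re}(b_j)\notin\mathbb{Z}_-$ and $c_\ell n+\mathrm{Re}(d_\ell)\notin\mathbb{Z}_-$ for all positive integers $n$ (when $r=1$ there are no $a_j,b_j$; when $s=1$ there are no $c_\ell,d_\ell$; empty products equal $1$). Put $A=\dfrac{\prod_{j=1}^{r-1}[a_j]_q}{\prod_{\ell=1}^{s-1}[c_\ell]_q}$ and $$\lambda_n=\frac{q^{n+\alpha}\prod_{\ell=1}^{s-1}[n]_{q^{c_\ell}}}{[n]_q\prod_{j=1}^{r-1}[n]_{q^{a_j}}}(q-1).$$ Then for every $z\in\mathbb{C}$, $$\lim_{n\to+\infty}{}_r\phi_s\!\left(\begin{array}{c}q^{-n},q^{a_1n+b_1},\dots,q^{a_{r-1}n+b_{r-1}}\\ q^{\alpha},q^{c_1n+d_1},\dots,q^{c_{s-1}n+d_{s-1}}\end{array};q,\lambda_n z\right)=\sum_{k=0}^{\infty}(-1)^{(1+r-s)k}q^{(2+s-r)\binom k2}A^k\frac{z^k q^{\alpha k}(1-q)^{(2+r-s)k}}{(q^{\alpha};q)_k(q;q)_k}.$$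
   Context: $\mathbb{Z}_-=\{0,-1,-2,\dots\}$. For $w\in\mathbb{C}$, $q^{w}:=e^{w\ln q}$. For $a\in\mathbb{C}$: $(a;q)_0=1$, $(a;q)_k=\prod_{j=0}^{k-1}(1-aq^{j})$, and $(a_1,\dots,a_r;q)_k=\prod_{i=1}^r(a_i;q)_k$. The $q$-number is $[z]_q=\dfrac{1-q^{z}}{1-q}$, and $[n]_{q^{a}}=\dfrac{1-q^{an}}{1-q^{a}}$. The basic hypergeometric series is $${}_r\phi_s\!\left(\begin{array}{c}a_1,\dots,a_r\\ b_1,\dots,b_s\end{array};q,z\right)=\sum_{k=0}^{\infty}\frac{(a_1,\dots,a_r;q)_k}{(b_1,\dots,b_s;q)_k}(-1)^{(1+s-r)k}q^{(1+s-r)\binom{k}{2}}\frac{z^k}{(q;q)_k};$$ when one numerator parameter is $q^{-n}$ it is a polynomial in $z$ of degree at most $n$. *)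

theory Defs
  imports "HOL-Analysis.Analysis"
begin

definition qpow :: "real \<Rightarrow> complex \<Rightarrow> complex" where
  "qpow q w = exp (w * complex_of_real (ln q))"

definition qpoch :: "complex \<Rightarrow> real \<Rightarrow> nat \<Rightarrow> complex" where
  "qpoch a q k = (\<Prod>j<k. 1 - a * complex_of_real q ^ j)"

definition qpoch_list :: "complex list \<Rightarrow> real \<Rightarrow> nat \<Rightarrow> complex" where
  "qpoch_list as q k = (\<Prod>a\<leftarrow>as. qpoch a q k)"

definition qnum :: "real \<Rightarrow> real \<Rightarrow> real" where
  "qnum q z = (1 - q powr z) / (1 - q)"

definition qhyp :: "complex list \<Rightarrow> complex list \<Rightarrow> real \<Rightarrow> complex \<Rightarrow> complex" where
  "qhyp as bs q z =
     (\<Sum>k. qpoch_list as q k / qpoch_list bs q k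
        * (-1) powi ((1 + int (length bs) - int (length as)) * int k)
        * complex_of_real (q powi ((1 + int (length bs) - int (length as)) * int (k choose 2)))
        * z ^ k / qpoch (complex_of_real q) q k)"

end

theory Submission
  imports Defs
begin

lemma qpow_real: "0 < q \<Longrightarrow> qpow q (complex_of_real x) = complex_of_real (q powr x)"
  by (simp add: qpow_def powr_def exp_of_real[symmetric])

lemma norm_qpow: "0 < q \<Longrightarrow> norm (qpow q w) = q powr Re w"
  by (simp add: qpow_def powr_def norm_exp_eq_Re)

lemma qpow_neg_nat: "0 < q \<Longrightarrow> qpow q (- of_nat n) = inverse (complex_of_real q ^ n)"
proof -
  assume q: "0 < q"
  have "qpow q (- of_nat n) = qpow q (complex_of_real (- real n))" by simp
  also have "\<dots> = complex_of_real (q powr (- real n))" using q by (rule qpow_real)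
  also have "\<dots> = inverse (complex_of_real q ^ n)" using q
    by (simp add: powr_minus powr_realpow)
  finally show ?thesis .
qed

lemma qpoch_Suc: "qpoch x q (Suc k) = qpoch x q k * (1 - x * complex_of_real q ^ k)"
  by (simp add: qpoch_def)

lemma qpoch_0[simp]: "qpoch x q 0 = 1" by (simp add: qpoch_def)

lemma qpoch_zero_arg: "qpoch 0 q k = 1" by (simp add: qpoch_def)

lemma qpoch_tendsto:
  assumes "(X \<longlongrightarrow> x) F"
  shows "((\<lambda>n. qpoch (X n) q k) \<longlongrightarrow> qpoch x q k) F"
  unfolding qpoch_def by (intro tendsto_intros assms)

lemma qpoch_upper:
  assumes "0 \<le> q" "q \<le> 1"
  shows "norm (qpoch x q k) \<le> (1 + norm x) ^ k"
proof (induction k)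
  case 0 then show ?case by simp
next
  case (Suc k)
  have "norm (1 - x * complex_of_real q ^ k) \<le> 1 + norm x * q ^ k"
    using norm_triangle_ineq4[of 1 "x * complex_of_real q ^ k"] assms
    by (simp add: norm_mult norm_power)
  also have "\<dots> \<le> 1 + norm x"
    using assms by (simp add: mult_left_le power_le_one)
  finally have h: "norm (1 - x * complex_of_real q ^ k) \<le> 1 + norm x" .
  have "norm (qpoch x q k) * norm (1 - x * complex_of_real q ^ k) \<le> (1 + norm x) ^ k * (1 + norm x)"
    by (rule mult_mono) (use Suc.IH h in auto)
  then show ?case unfolding qpoch_Suc norm_mult by (simp add: mult.commute)
qed

lemma qpoch_nonzero:
  assumes "\<And>j. 1 - x * complex_of_real q ^ j \<noteq> 0"
  shows "qpoch x q k \<noteq> 0"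
  using assms by (simp add: qpoch_def)

lemma qpoch_lower:
  assumes q: "0 \<le> q" and J: "\<And>j. j \<ge> J \<Longrightarrow> norm x * q ^ j \<le> 1/2"
  shows "norm (qpoch x q k) \<ge> Min ((\<lambda>k. norm (qpoch x q k)) ` {..J}) * (1/2) ^ k"
proof -
  define m where "m = Min ((\<lambda>k. norm (qpoch x q k)) ` {..J})"
  have m0: "m \<ge> 0" unfolding m_def by (subst Min_ge_iff) auto
  have mle: "m \<le> norm (qpoch x q k)" if "k \<le> J" for k
    unfolding m_def using that by (intro Min_le) auto
  have "norm (qpoch x q k) \<ge> m * (1/2) ^ k"
  proof (cases "k \<le> J")
    case True
    have "m * (1/2)^k \<le> m * 1" using m0 by (intro mult_left_mono) (auto simp: power_le_one)
    then show ?thesis using mle[OF True] by simp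
  next
    case False
    then have "J \<le> k" by simp
    then show ?thesis
    proof (induction k rule: dec_induct)
      case base
      have "m * (1/2)^J \<le> m * 1" using m0 by (intro mult_left_mono) (auto simp: power_le_one)
      then show ?case using mle[of J] by simp
    next
      case (step k)
      have "norm (1 - x * complex_of_real q ^ k) \<ge> 1 - norm (x * complex_of_real q ^ k)"
        by (metis norm_one norm_triangle_ineq2)
      also have "norm (x * complex_of_real q ^ k) = norm x * q ^ k"
        using q by (simp add: norm_mult norm_power)
      finally have h: "norm (1 - x * complex_of_real q ^ k) \<ge> 1/2" using J[OF step(1)] by simp
      have "m * (1/2) ^ Suc k = (m * (1/2)^k) * (1/2)" by simp
      also have "\<dots> \<le> norm (qpoch x q k) * norm (1 - x * complex_of_real q ^ k)"
        using step(3) h m0 by (intro mult_mono) auto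
      finally show ?case by (simp add: qpoch_Suc norm_mult)
    qed
  qed
  then show ?thesis unfolding m_def .
qed

lemma qpoch_lower_pos:
  assumes q: "0 \<le> q" and J: "\<And>j. j \<ge> J \<Longrightarrow> norm x * q ^ j \<le> 1/2"
    and nz: "\<And>j. 1 - x * complex_of_real q ^ j \<noteq> 0"
  shows "\<exists>m>0. \<forall>k. norm (qpoch x q k) \<ge> m * (1/2) ^ k"
proof (intro exI conjI allI)
  show "0 < Min ((\<lambda>k. norm (qpoch x q k)) ` {..J})"
    using qpoch_nonzero[OF nz] by (subst Min_gr_iff) auto
  show "norm (qpoch x q k) \<ge> Min ((\<lambda>k. norm (qpoch x q k)) ` {..J}) * (1/2) ^ k" for k
    by (rule qpoch_lower[OF q J])
qed

lemma prod_list_upt: "prod_list (map f [m..<n]) = prod f {m..<n}"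
  by (metis distinct_upt prod.distinct_set_conv_list set_upt)

lemma prod_pow_choose: "(\<Prod>j<k. (x::'a::comm_monoid_mult) ^ j) = x ^ (k choose 2)"
proof (induction k)
  case 0 then show ?case by (simp add: numeral_2_eq_2)
next
  case (Suc k)
  have "Suc k choose 2 = k + (k choose 2)"
    using binomial_Suc_Suc[of k 1] by (simp add: numeral_2_eq_2)
  then show ?case using Suc by (simp add: power_add mult.commute)
qed

lemma prod_neg_pow_choose: "(\<Prod>j<k. - ((x::'a::comm_ring_1) ^ j)) = (-1) ^ k * x ^ (k choose 2)"
proof -
  have "(\<Prod>j<k. - (x ^ j)) = (\<Prod>j<k. (-1) * x ^ j)" by simp
  also have "\<dots> = (\<Prod>j<k. (-1::'a)) * (\<Prod>j<k. x ^ j)" by (rule prod.distrib)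
  finally show ?thesis by (simp add: prod_pow_choose)
qed

lemma powr_lin_eq:
  assumes "0 < q" shows "q powr (a * real n + e) = q powr e * (q powr a) ^ n"
  using assms by (simp add: powr_add powr_power mult.commute)

lemma powr_lt1: "0 < (q::real) \<Longrightarrow> q < 1 \<Longrightarrow> 0 < a \<Longrightarrow> q powr a < 1"
  using powr_less_mono2[of a q 1] by auto

lemma norm_qpow_lin:
  assumes "0 < q"
  shows "norm (qpow q (complex_of_real a * of_nat n + b)) = q powr Re b * (q powr a) ^ n"
  using assms by (simp add: norm_qpow powr_lin_eq)

lemma qpow_lin_tendsto:
  assumes "0 < q" "q < 1" "0 < a"
  shows "(\<lambda>n. qpow q (complex_of_real a * of_nat n + b)) \<longlonglongrightarrow> 0"
proof -
  have "(\<lambda>n. q powr Re b * (q powr a) ^ n) \<longlonglongrightarrow> q powr Re b * 0"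
    using assms by (intro tendsto_intros LIMSEQ_power_zero) (simp add: powr_lt1)
  then show ?thesis
    by (subst tendsto_norm_zero_iff[symmetric]) (simp add: norm_qpow_lin assms)
qed

lemma powr_mult_tendsto:
  assumes "0 < q" "q < 1" "0 < a"
  shows "(\<lambda>n. q powr (a * real n)) \<longlonglongrightarrow> 0"
proof -
  have "(\<lambda>n. (q powr a) ^ n) \<longlonglongrightarrow> 0"
    using assms by (intro LIMSEQ_power_zero) (simp add: powr_lt1)
  then show ?thesis using assms by (simp add: powr_power mult.commute)
qed

lemma norm_qpow_lin_le:
  assumes "0 < q" "q < 1" "0 \<le> a"
  shows "norm (qpow q (complex_of_real a * of_nat n + b)) \<le> q powr Re b"
proof -
  have "(q powr a) ^ n \<le> 1" using assms by (intro power_le_one) (use powr_mono2[of a q 1] in auto)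
  then show ?thesis using assms by (simp add: norm_qpow_lin mult_left_le)
qed

theorem proposition4:
  fixes q \<alpha> :: real and r s :: nat
    and a c :: "nat \<Rightarrow> real" and b d :: "nat \<Rightarrow> complex"
    and z :: complex
  assumes q: "0 < q" "q < 1"
    and rs: "r \<ge> 1" "s \<ge> 1" "r - 1 \<le> s"
    and alpha: "\<forall>m::int. m \<le> 0 \<longrightarrow> \<alpha> \<noteq> of_int m"
    and a_pos: "\<forall>j\<in>{1..r-1}. a j > 0"
    and c_pos: "\<forall>l\<in>{1..s-1}. c l > 0"
    and ab: "\<forall>j\<in>{1..r-1}. \<forall>n::nat. n \<ge> 1 \<longrightarrow>
              (\<forall>m::int. m \<le> 0 \<longrightarrow> a j * real n + Re (b j) \<noteq> of_int m)"
    and cd: "\<forall>l\<in>{1..s-1}. \<forall>n::nat. n \<ge> 1 \<longrightarrow>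
              (\<forall>m::int. m \<le> 0 \<longrightarrow> c l * real n + Re (d l) \<noteq> of_int m)"
  defines "lam \<equiv> (\<lambda>n::nat. q powr (real n + \<alpha>) * (\<Prod>l=1..s-1. (1 - q powr (c l * real n)) / (1 - q powr (c l)))
              / (qnum q (real n) * (\<Prod>j=1..r-1. (1 - q powr (a j * real n)) / (1 - q powr (a j))))
              * (q - 1))"
    and "T \<equiv> (\<lambda>k::nat. (-1) powi ((1 + int r - int s) * int k)
              * complex_of_real (q powi ((2 + int s - int r) * int (k choose 2)) * ((\<Prod>j=1..r-1. qnum q (a j)) / (\<Prod>l=1..s-1. qnum q (c l))) ^ k)
              * z ^ k * complex_of_real (q powr (\<alpha> * real k) * (1 - q) powi ((2 + int r - int s) * int k))
              / (qpoch (qpow q (complex_of_real \<alpha>)) q k * qpoch (complex_of_real q) q k))"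
  shows "summable T \<and>
    (\<lambda>n. qhyp (qpow q (- of_nat n) # map (\<lambda>j. qpow q (of_real (a j) * of_nat n + b j)) [1..<r])
               (qpow q (complex_of_real \<alpha>) # map (\<lambda>l. qpow q (of_real (c l) * of_nat n + d l)) [1..<s])
               q (complex_of_real (lam n) * z))
    \<longlonglongrightarrow> (\<Sum>k. T k)"
proof -
  have rr: "{1..r-1} = {1..<r}" using rs by auto
  have ss: "{1..s-1} = {1..<s}" using rs by auto
  define Q where "Q = complex_of_real q"
  define sg :: int where "sg = 1 + int s - int r"
  define qa where "qa = qpow q (complex_of_real \<alpha>)"
  define Pn where "Pn n k = (\<Prod>j\<in>{1..<r}. qpoch (qpow q (of_real (a j) * of_nat n + b j)) q k)" for n k
  define Pd where "Pd n k = (\<Prod>l\<in>{1..<s}. qpoch (qpow q (of_real (c l) * of_nat n + d l)) q k)" for n k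
  define f where "f n k = (qpoch (qpow q (- of_nat n)) q k * Pn n k) / (qpoch qa q k * Pd n k)
      * (-1) powi (sg * int k) * complex_of_real (q powi (sg * int (k choose 2)))
      * (complex_of_real (lam n) * z) ^ k / qpoch Q q k" for n k
  have qhyp_eq: "qhyp (qpow q (- of_nat n) # map (\<lambda>j. qpow q (of_real (a j) * of_nat n + b j)) [1..<r])
               (qpow q (complex_of_real \<alpha>) # map (\<lambda>l. qpow q (of_real (c l) * of_nat n + d l)) [1..<s])
               q (complex_of_real (lam n) * z) = (\<Sum>k. f n k)" for n
  proof -
    have "int (length [1..<r]) = int r - 1" "int (length [1..<s]) = int s - 1" using rs by auto
    then show ?thesis
      unfolding qhyp_def f_def Pn_def Pd_def qpoch_list_def qa_def Q_def sg_def
      by (simp add: o_def prod_list_upt algebra_simps)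
  qed
  define Pc where "Pc n = (\<Prod>l=1..s-1. (1 - q powr (c l * real n)) / (1 - q powr (c l)))" for n :: nat
  define Pa where "Pa n = (\<Prod>j=1..r-1. (1 - q powr (a j * real n)) / (1 - q powr (a j)))" for n :: nat
  define \<mu> where "\<mu> n = q powr \<alpha> * Pc n / (qnum q (real n) * Pa n) * (q - 1)" for n :: nat
  define PcI where "PcI = (\<Prod>l=1..s-1. 1 / (1 - q powr (c l)))"
  define PaI where "PaI = (\<Prod>j=1..r-1. 1 / (1 - q powr (a j)))"
  define L where "L = q powr \<alpha> * PcI / (1 / (1 - q) * PaI) * (q - 1)"
  have lam_eq: "lam n = q ^ n * \<mu> n" for n
    unfolding lam_def \<mu>_def Pc_def[symmetric] Pa_def[symmetric]
    using q by (simp add: powr_add powr_realpow)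
  have Pc_lim: "Pc \<longlonglongrightarrow> PcI"
    unfolding Pc_def PcI_def
  proof (intro tendsto_prod)
    fix l assume l: "l \<in> {1..s-1}"
    have "(\<lambda>n. (1 - q powr (c l * real n)) / (1 - q powr (c l))) \<longlonglongrightarrow> (1 - 0) / (1 - q powr (c l))"
      using q c_pos[rule_format, OF l] by (intro tendsto_intros powr_mult_tendsto) auto
    then show "(\<lambda>n. (1 - q powr (c l * real n)) / (1 - q powr (c l))) \<longlonglongrightarrow> 1 / (1 - q powr (c l))"
      by simp
  qed
  have Pa_lim: "Pa \<longlonglongrightarrow> PaI"
    unfolding Pa_def PaI_def
  proof (intro tendsto_prod)
    fix l assume l: "l \<in> {1..r-1}"
    have "(\<lambda>n. (1 - q powr (a l * real n)) / (1 - q powr (a l))) \<longlonglongrightarrow> (1 - 0) / (1 - q powr (a l))"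
      using q a_pos[rule_format, OF l] by (intro tendsto_intros powr_mult_tendsto) auto
    then show "(\<lambda>n. (1 - q powr (a l * real n)) / (1 - q powr (a l))) \<longlonglongrightarrow> 1 / (1 - q powr (a l))"
      by simp
  qed
  have PaI_nz: "PaI \<noteq> 0"
    unfolding PaI_def using q a_pos powr_lt1[of q] by (auto simp: prod_zero_iff)
  have qnum_lim: "(\<lambda>n. qnum q (real n)) \<longlonglongrightarrow> 1 / (1 - q)"
  proof -
    have "(\<lambda>n. (1 - q ^ n) / (1 - q)) \<longlonglongrightarrow> (1 - 0) / (1 - q)"
      using q by (intro tendsto_intros LIMSEQ_power_zero) auto
    then show ?thesis using q by (simp add: qnum_def powr_realpow)
  qed
  have mu_lim: "\<mu> \<longlonglongrightarrow> L"
    unfolding \<mu>_def L_def using q PaI_nz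
    by (intro tendsto_intros Pc_lim Pa_lim qnum_lim) auto
  define W where "W n k = (\<Prod>j<k. Q ^ n - Q ^ j) * complex_of_real (\<mu> n) ^ k" for n k :: nat
  define R where "R n k = Pn n k / Pd n k" for n k
  define Cc where "Cc k = (-1) powi (sg * int k) * complex_of_real (q powi (sg * int (k choose 2)))
      * z ^ k / (qpoch qa q k * qpoch Q q k)" for k
  have Qnz: "Q \<noteq> 0" using q by (simp add: Q_def)
  have W_eq: "qpoch (qpow q (- of_nat n)) q k * complex_of_real (lam n) ^ k = W n k" for n k
  proof -
    have "qpoch (qpow q (- of_nat n)) q k * complex_of_real (lam n) ^ k
        = (\<Prod>j<k. 1 - inverse (Q ^ n) * Q ^ j) * (\<Prod>j<k. Q ^ n) * complex_of_real (\<mu> n) ^ k"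
      using q by (simp add: qpoch_def qpow_neg_nat Q_def lam_eq power_mult_distrib)
    also have "\<dots> = (\<Prod>j<k. (1 - inverse (Q ^ n) * Q ^ j) * Q ^ n) * complex_of_real (\<mu> n) ^ k"
      by (simp add: prod.distrib)
    also have "(\<Prod>j<k. (1 - inverse (Q ^ n) * Q ^ j) * Q ^ n) = (\<Prod>j<k. Q ^ n - Q ^ j)"
      using Qnz by (intro prod.cong) (auto simp: field_simps)
    finally show ?thesis unfolding W_def .
  qed
  have f_eq: "f n k = W n k * R n k * Cc k" for n k
    unfolding f_def R_def Cc_def W_eq[symmetric]
    by (simp add: divide_inverse power_mult_distrib inverse_mult_distrib mult_ac)
  have Qn0: "(\<lambda>n. Q ^ n) \<longlonglongrightarrow> 0"
    using q by (intro LIMSEQ_power_zero) (simp add: Q_def)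
  have W_lim: "(\<lambda>n. W n k) \<longlonglongrightarrow> (\<Prod>j<k. 0 - Q ^ j) * complex_of_real L ^ k" for k
    unfolding W_def by (intro tendsto_intros Qn0 mu_lim)
  have Pn_lim: "(\<lambda>n. Pn n k) \<longlonglongrightarrow> 1" for k
  proof -
    have "(\<lambda>n. Pn n k) \<longlonglongrightarrow> (\<Prod>j\<in>{1..<r}. qpoch 0 q k)"
      unfolding Pn_def
    proof (intro tendsto_prod qpoch_tendsto qpow_lin_tendsto)
      fix j assume "j \<in> {1..<r}"
      then show "0 < a j" using a_pos rr by auto
    qed (use q in auto)
    then show ?thesis by (simp add: qpoch_zero_arg)
  qed
  have Pd_lim: "(\<lambda>n. Pd n k) \<longlonglongrightarrow> 1" for k
  proof -
    have "(\<lambda>n. Pd n k) \<longlonglongrightarrow> (\<Prod>j\<in>{1..<s}. qpoch 0 q k)"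
      unfolding Pd_def
    proof (intro tendsto_prod qpoch_tendsto qpow_lin_tendsto)
      fix j assume "j \<in> {1..<s}"
      then show "0 < c j" using c_pos ss by auto
    qed (use q in auto)
    then show ?thesis by (simp add: qpoch_zero_arg)
  qed
  have R_lim: "(\<lambda>n. R n k) \<longlonglongrightarrow> 1" for k
    using tendsto_divide[OF Pn_lim Pd_lim] unfolding R_def by simp
  define E where "E k = (\<Prod>j<k. 0 - Q ^ j) * complex_of_real L ^ k * 1 * Cc k" for k
  have f_lim: "(\<lambda>n. f n k) \<longlonglongrightarrow> E k" for k
    unfolding f_eq E_def by (intro tendsto_intros W_lim R_lim)
  define A where "A = (\<Prod>j=1..r-1. qnum q (a j)) / (\<Prod>l=1..s-1. qnum q (c l))"
  define e :: int where "e = 2 + int r - int s"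
  define u where "u = 1 - q"
  have u0: "u > 0" using q by (simp add: u_def)
  define Na where "Na = (\<Prod>j=1..r-1. 1 - q powr (a j))"
  define Nc where "Nc = (\<Prod>l=1..s-1. 1 - q powr (c l))"
  have Nc0: "Nc \<noteq> 0" unfolding Nc_def using q c_pos powr_lt1[of q] by (auto simp: prod_zero_iff)
  have Na0: "Na \<noteq> 0" unfolding Na_def using q a_pos powr_lt1[of q] by (auto simp: prod_zero_iff)
  have ue: "u powi e * u ^ (s - 1) = u ^ 2 * u ^ (r - 1)"
  proof -
    have "u powi e * u ^ (s - 1) = u powi (e + int (s - 1))"
      using u0 by (simp add: power_int_add power_int_of_nat)
    also have "e + int (s - 1) = int (2 + (r - 1))" using rs by (simp add: e_def)
    finally show ?thesis by (simp only: power_int_of_nat power_add)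
  qed
  have A_eq: "A = (Na / u ^ (r - 1)) / (Nc / u ^ (s - 1))"
    unfolding A_def Na_def Nc_def qnum_def u_def by (simp add: prod_dividef)
  have PaI_eq: "PaI = 1 / Na" unfolding PaI_def Na_def by (simp add: prod_dividef)
  have PcI_eq: "PcI = 1 / Nc" unfolding PcI_def Nc_def by (simp add: prod_dividef)
  have L_eq: "L = - (q powr \<alpha> * u powi e * A)"
  proof -
    have "u powi e * A = (u powi e * u ^ (s - 1)) * Na / (u ^ (r - 1) * Nc)"
      unfolding A_eq using u0 Nc0 by (simp add: field_simps)
    also have "\<dots> = u ^ 2 * Na / Nc" unfolding ue using u0 Nc0 by (simp add: field_simps)
    finally have "u powi e * A = u ^ 2 * Na / Nc" .
    moreover have "L = - (q powr \<alpha> * (u ^ 2 * Na / Nc))"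
      unfolding L_def PaI_eq PcI_eq u_def using Nc0 Na0 q
      by (simp add: field_simps power2_eq_square)
    ultimately show ?thesis by (simp add: mult.assoc)
  qed
  have ET: "E k = T k" for k
  proof -
    have p1: "(\<Prod>j<k. 0 - Q ^ j) = (-1) ^ k * complex_of_real (q ^ (k choose 2))"
      using prod_neg_pow_choose[where x=Q and k=k] by (simp add: Q_def)
    have "L ^ k = (-1) ^ k * ((q powr \<alpha>) ^ k * (u powi e) ^ k * A ^ k)"
      unfolding L_eq by (simp add: power_mult_distrib power_minus')
    also have "\<dots> = (-1) ^ k * (q powr (\<alpha> * real k) * (1 - q) powi ((2 + int r - int s) * int k) * A ^ k)"
      using q by (simp add: powr_power power_int_power' u_def e_def mult.commute)
    finally have p3r: "L ^ k = (-1) ^ k * (q powr (\<alpha> * real k) * (1 - q) powi ((2 + int r - int s) * int k) * A ^ k)" .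
    have p3: "complex_of_real L ^ k = (-1) ^ k * complex_of_real (q powr (\<alpha> * real k) * (1 - q) powi ((2 + int r - int s) * int k) * A ^ k)"
      unfolding of_real_power[symmetric] p3r by simp
    have p4: "(-1::complex) ^ k * (-1) ^ k * (-1) powi (sg * int k) = (-1) powi ((1 + int r - int s) * int k)"
    proof -
      have "sg * int k = (1 + int r - int s) * int k + 2 * ((int s - int r) * int k)"
        by (simp add: sg_def algebra_simps)
      then have "(-1::complex) powi (sg * int k) = (-1) powi ((1 + int r - int s) * int k) * ((-1) powi 2) powi ((int s - int r) * int k)"
        by (simp add: power_int_add power_int_mult)
      moreover have "(-1::complex) ^ k * (-1) ^ k = 1"
        by (simp flip: power_add)
      ultimately show ?thesis by simp
    qed
    have p5: "q ^ (k choose 2) * q powi (sg * int (k choose 2)) = q powi ((2 + int s - int r) * int (k choose 2))"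
    proof -
      have "(2 + int s - int r) * int (k choose 2) = int (k choose 2) + sg * int (k choose 2)"
        by (simp add: sg_def algebra_simps)
      then show ?thesis using q by (simp add: power_int_add power_int_of_nat)
    qed
    show ?thesis
      unfolding E_def Cc_def T_def p1 p3 p4[symmetric] p5[symmetric] A_def[symmetric] qa_def[symmetric] Q_def[symmetric]
      apply (simp only: of_real_mult of_real_power divide_inverse mult_1_right)
      apply (simp only: mult_ac)
      done
  qed
  obtain B where B0: "B > 0" and Bb: "\<And>n. norm (\<mu> n) \<le> B"
    using convergent_imp_Bseq[OF convergentI[OF mu_lim]] by (auto elim: BseqE)
  have W_bd: "norm (W n k) \<le> q ^ (k choose 2) * B ^ k" for n k
  proof -
    have P: "norm (\<Prod>j<k. Q ^ n - Q ^ j) \<le> q ^ (k choose 2)"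
    proof (cases "k \<le> n")
      case True
      have "norm (\<Prod>j<k. Q ^ n - Q ^ j) = (\<Prod>j<k. norm (Q ^ n - Q ^ j))"
        by (simp add: prod_norm)
      also have "\<dots> \<le> (\<Prod>j<k. q ^ j)"
      proof (intro prod_mono conjI)
        fix j assume j: "j \<in> {..<k}"
        have "q ^ n \<le> q ^ j" using j True q by (intro power_decreasing) auto
        moreover have "Q ^ n - Q ^ j = complex_of_real (q ^ n - q ^ j)" by (simp add: Q_def)
        then have "norm (Q ^ n - Q ^ j) = \<bar>q ^ n - q ^ j\<bar>" by (simp only: norm_of_real)
        moreover have "q ^ n \<ge> 0" using q by simp
        ultimately show "norm (Q ^ n - Q ^ j) \<le> q ^ j" using \<open>q ^ n \<le> q ^ j\<close> by linarith
      qed simp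
      finally show ?thesis by (simp add: prod_pow_choose)
    next
      case False
      then have "(\<Prod>j<k. Q ^ n - Q ^ j) = 0" by (intro prod_zero) auto
      then show ?thesis using q by (simp only: norm_zero zero_le_power less_imp_le)
    qed
    have "norm (complex_of_real (\<mu> n) ^ k) \<le> B ^ k"
      using Bb[of n] by (simp add: norm_power power_mono)
    then show ?thesis unfolding W_def norm_mult using P q
      by (intro mult_mono) auto
  qed
  have "eventually (\<lambda>n. \<forall>l\<in>{1..<s}. norm (qpow q (of_real (c l) * of_nat n + d l)) < 1/2) sequentially"
  proof (intro eventually_ball_finite ballI)
    fix l assume l: "l \<in> {1..<s}"
    have "c l > 0" using c_pos l ss by auto
    then have "(\<lambda>n. norm (qpow q (of_real (c l) * of_nat n + d l))) \<longlonglongrightarrow> 0"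
      using q by (intro tendsto_norm_zero qpow_lin_tendsto) auto
    then show "eventually (\<lambda>n. norm (qpow q (of_real (c l) * of_nat n + d l)) < 1/2) sequentially"
      by (rule order_tendstoD) simp
  qed simp
  then obtain N where N: "\<And>n l. n \<ge> N \<Longrightarrow> l \<in> {1..<s} \<Longrightarrow> norm (qpow q (of_real (c l) * of_nat n + d l)) < 1/2"
    unfolding eventually_sequentially by blast
  define Ka where "Ka = (\<Prod>j\<in>{1..<r}. 1 + q powr Re (b j))"
  have Ka0: "Ka \<ge> 0" unfolding Ka_def by (intro prod_nonneg) (auto intro: add_nonneg_nonneg)
  have Pn_bd: "norm (Pn n k) \<le> Ka ^ k" for n k
  proof -
    have "norm (Pn n k) = (\<Prod>j\<in>{1..<r}. norm (qpoch (qpow q (of_real (a j) * of_nat n + b j)) q k))"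
      unfolding Pn_def by (simp add: prod_norm)
    also have "\<dots> \<le> (\<Prod>j\<in>{1..<r}. (1 + q powr Re (b j)) ^ k)"
    proof (intro prod_mono conjI)
      fix j assume j: "j \<in> {1..<r}"
      have "a j > 0" using a_pos j rr by auto
      then have "norm (qpow q (of_real (a j) * of_nat n + b j)) \<le> q powr Re (b j)"
        using q by (intro norm_qpow_lin_le) auto
      then show "norm (qpoch (qpow q (of_real (a j) * of_nat n + b j)) q k) \<le> (1 + q powr Re (b j)) ^ k"
      proof -
        let ?x = "qpow q (of_real (a j) * of_nat n + b j)"
        have "norm (qpoch ?x q k) \<le> (1 + norm ?x) ^ k"
          using q by (intro qpoch_upper) auto
        also have "\<dots> \<le> (1 + q powr Re (b j)) ^ k"
          using \<open>norm ?x \<le> q powr Re (b j)\<close> by (intro power_mono) auto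
        finally show ?thesis .
      qed
    qed simp
    finally show ?thesis by (simp add: Ka_def prod_power_distrib)
  qed
  have Pd_bd: "norm (Pd n k) \<ge> ((1/2) ^ k) ^ (s - 1)" if n: "n \<ge> N" for n k
  proof -
    have "((1/2) ^ k) ^ (s - 1) = (\<Prod>l\<in>{1..<s}. (1/2::real) ^ k)" by simp
    also have "\<dots> \<le> (\<Prod>l\<in>{1..<s}. norm (qpoch (qpow q (of_real (c l) * of_nat n + d l)) q k))"
    proof (intro prod_mono conjI)
      fix l assume l: "l \<in> {1..<s}"
      let ?x = "qpow q (of_real (c l) * of_nat n + d l)"
      have "norm ?x * q ^ j \<le> 1/2" for j
      proof -
        have "norm ?x * q ^ j \<le> norm ?x * 1" using q by (intro mult_left_mono power_le_one) auto
        then show ?thesis using N[OF n l] by simp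
      qed
      then have "norm (qpoch ?x q k) \<ge> Min ((\<lambda>k. norm (qpoch ?x q k)) ` {..0}) * (1/2) ^ k"
        using q by (intro qpoch_lower) auto
      then show "(1/2) ^ k \<le> norm (qpoch ?x q k)" by simp
    qed simp
    also have "\<dots> = norm (Pd n k)" unfolding Pd_def by (simp add: prod_norm)
    finally show ?thesis .
  qed
  have R_bd: "norm (R n k) \<le> (Ka * 2 ^ (s - 1)) ^ k" if n: "n \<ge> N" for n k
  proof -
    have "norm (R n k) = norm (Pn n k) / norm (Pd n k)" unfolding R_def by (simp add: norm_divide)
    also have "\<dots> \<le> Ka ^ k / ((1/2) ^ k) ^ (s - 1)"
      using Pn_bd Pd_bd[OF n] Ka0 by (intro frac_le) auto
    also have "\<dots> = (Ka * 2 ^ (s - 1)) ^ k"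
      by (simp add: power_mult_distrib field_simps flip: power_mult)
    finally show ?thesis .
  qed
  have exJ: "\<exists>J. \<forall>j\<ge>J. K * q ^ j \<le> 1/2" for K :: real
  proof -
    have "(\<lambda>j. K * q ^ j) \<longlonglongrightarrow> K * 0" using q by (intro tendsto_intros LIMSEQ_power_zero) auto
    then have "eventually (\<lambda>j. K * q ^ j < 1/2) sequentially" by (intro order_tendstoD) auto
    then show ?thesis unfolding eventually_sequentially by (meson less_imp_le)
  qed
  have qa_eq: "qa = complex_of_real (q powr \<alpha>)" unfolding qa_def using q by (simp add: qpow_real)
  obtain m1 where m1: "m1 > 0" "\<And>k. norm (qpoch qa q k) \<ge> m1 * (1/2) ^ k"
  proof -
    obtain J where J: "\<And>j. j \<ge> J \<Longrightarrow> q powr \<alpha> * q ^ j \<le> 1/2" using exJ by blast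
    have "\<exists>m>0. \<forall>k. norm (qpoch qa q k) \<ge> m * (1/2) ^ k"
    proof (rule qpoch_lower_pos)
      show "j \<ge> J \<Longrightarrow> norm qa * q ^ j \<le> 1/2" for j using J q by (simp add: qa_eq)
      show "1 - qa * complex_of_real q ^ j \<noteq> 0" for j
      proof
        assume "1 - qa * complex_of_real q ^ j = 0"
        then have "q powr \<alpha> * q ^ j = 1" unfolding qa_eq
          by (metis eq_iff_diff_eq_0 of_real_eq_1_iff of_real_mult of_real_power)
        then have "q powr (\<alpha> + real j) = 1" using q by (simp add: powr_add powr_realpow)
        then have "\<alpha> + real j = 0" using q powr_eq_one_iff_gen[of q] by auto
        then have "\<alpha> = of_int (- int j)" by simp
        then show False using alpha[rule_format, of "- int j"] by simp
      qed
    qed (use q in auto)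
    then show ?thesis using that by blast
  qed
  obtain m2 where m2: "m2 > 0" "\<And>k. norm (qpoch Q q k) \<ge> m2 * (1/2) ^ k"
  proof -
    obtain J where J: "\<And>j. j \<ge> J \<Longrightarrow> q * q ^ j \<le> 1/2" using exJ by blast
    have "\<exists>m>0. \<forall>k. norm (qpoch Q q k) \<ge> m * (1/2) ^ k"
    proof (rule qpoch_lower_pos)
      show "j \<ge> J \<Longrightarrow> norm Q * q ^ j \<le> 1/2" for j using J q by (simp add: Q_def)
      show "1 - Q * complex_of_real q ^ j \<noteq> 0" for j
      proof
        assume "1 - Q * complex_of_real q ^ j = 0"
        then have "q ^ Suc j = 1" unfolding Q_def
          by (metis eq_iff_diff_eq_0 of_real_eq_1_iff of_real_mult of_real_power power_Suc)
        moreover have "q ^ Suc j < 1" using q power_Suc_less_one[of q j] by simp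
        ultimately show False by simp
      qed
    qed (use q in auto)
    then show ?thesis using that by blast
  qed
  have sg0: "sg \<ge> 0" using rs by (simp add: sg_def)
  have Cc_bd: "norm (Cc k) \<le> (norm z * 4) ^ k / (m1 * m2)" for k
  proof -
    have qs: "q powi (sg * int (k choose 2)) \<le> 1"
      using sg0 q by (simp add: power_int_def power_le_one)
    have qs0: "q powi (sg * int (k choose 2)) \<ge> 0" using q by simp
    have "norm (Cc k) = q powi (sg * int (k choose 2)) * norm z ^ k / (norm (qpoch qa q k) * norm (qpoch Q q k))"
      unfolding Cc_def using q by (simp add: norm_mult norm_divide norm_power_int norm_power)
    also have "\<dots> \<le> 1 * norm z ^ k / ((m1 * (1/2) ^ k) * (m2 * (1/2) ^ k))"
      using qs qs0 m1 m2 by (intro frac_le mult_right_mono mult_mono) auto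
    also have "\<dots> = (norm z * 4) ^ k / (m1 * m2)"
    proof -
      have four: "(2::real) ^ k * 2 ^ k = 4 ^ k" by (simp flip: power_mult_distrib)
      show ?thesis by (simp add: power_mult_distrib field_simps four flip: power_mult)
    qed
    finally show ?thesis .
  qed
  define D where "D = B * (Ka * 2 ^ (s - 1)) * (norm z * 4)"
  have D0: "D \<ge> 0" unfolding D_def using B0 Ka0 by simp
  define M where "M k = q ^ (k choose 2) * D ^ k / (m1 * m2)" for k
  have f_bd: "norm (f n k) \<le> M k" if n: "n \<ge> N" for n k
  proof -
    have "norm (f n k) = norm (W n k) * norm (R n k) * norm (Cc k)"
      by (simp add: f_eq norm_mult)
    also have "\<dots> \<le> (q ^ (k choose 2) * B ^ k) * (Ka * 2 ^ (s - 1)) ^ k * ((norm z * 4) ^ k / (m1 * m2))"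
      using W_bd R_bd[OF n] Cc_bd q B0 Ka0
      by (intro mult_mono) (auto intro!: mult_nonneg_nonneg)
    also have "\<dots> = M k" unfolding M_def D_def by (simp add: power_mult_distrib)
    finally show ?thesis .
  qed
  have M_sum: "summable M"
  proof -
    obtain J where J: "\<And>j. j \<ge> J \<Longrightarrow> D * q ^ j \<le> 1/2" using exJ by blast
    have "summable (\<lambda>k. q ^ (k choose 2) * D ^ k)"
    proof (rule summable_ratio_test[of "1/2" J])
      fix k assume k: "J \<le> k"
      have "Suc k choose 2 = k + (k choose 2)"
        using binomial_Suc_Suc[of k 1] by (simp add: numeral_2_eq_2)
      then have "norm (q ^ (Suc k choose 2) * D ^ Suc k) = (D * q ^ k) * norm (q ^ (k choose 2) * D ^ k)"
        using q D0 by (simp add: power_add abs_mult)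
      also have "\<dots> \<le> 1/2 * norm (q ^ (k choose 2) * D ^ k)"
        using J[OF k] by (intro mult_right_mono) auto
      finally show "norm (q ^ (Suc k choose 2) * D ^ Suc k) \<le> 1/2 * norm (q ^ (k choose 2) * D ^ k)" .
    qed simp
    then show ?thesis unfolding M_def by (rule summable_divide)
  qed
  have bound: "eventually (\<lambda>(k, n). norm (f n k) \<le> M k) (at_top \<times>\<^sub>F sequentially)"
    unfolding eventually_prod_filter
    by (rule exI[of _ "\<lambda>_. True"], rule exI[of _ "\<lambda>n. n \<ge> N"])
       (auto simp: eventually_sequentially f_bd)
  have tan: "eventually (\<lambda>n. summable (\<lambda>k. norm (f n k))) sequentially \<and>
           summable (\<lambda>k. norm (T k)) \<and>
           ((\<lambda>n. suminf (\<lambda>k. f n k)) \<longlongrightarrow> suminf T) sequentially"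
    using tannerys_theorem[of "\<lambda>k n. f n k" T sequentially M] f_lim ET bound M_sum by auto
  then show ?thesis unfolding qhyp_eq using summable_norm_cancel by blast
qed

end
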